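(* Let $X\subset\mathbb{C}^2$ be a Riemann surface embedded in $\mathbb{C}^2$ (a one-dimensional complex submanifold), let $\pi:\mathbb{C}^2\to\mathbb{C}$, $\pi(x,y)=x$, and suppose that $\pi_X=\pi|_X:X\to\mathbb{C}$ is a proper map. Let $P\subset X$ be a closed discrete subset. Suppose that for every $x\in\mathbb{C}$ such that the fibre $\pi_X^{-1}(x)$ contains a point of $P$, one of the following holds: either $\pi_X^{-1}(x)\subset P$, or all but exactly one point of $\pi_X^{-1}(x)$ lie in $P$ and $\pi_X$ is a submersion (i.e. has nonzero differential) at the unique point of $\pi_X^{-1}(x)\setminus P$. Then $X\setminus P$ admits a proper holomorphic embedding into $\mathbb{C}^2$. *)

theory Defs
  imports "HOL-Complex_Analysis.Complex_Analysis"
begin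

text \<open>C^2 is modelled as complex \<times> complex; pi is fst.\<close>

definition chart :: "(complex \<times> complex) set \<Rightarrow> (complex \<Rightarrow> complex \<times> complex) \<Rightarrow> complex set \<Rightarrow> bool" where
  "chart X \<gamma> V \<longleftrightarrow> open V \<and>
     (fst \<circ> \<gamma>) holomorphic_on V \<and> (snd \<circ> \<gamma>) holomorphic_on V \<and>
     (\<forall>t\<in>V. (deriv (fst \<circ> \<gamma>) t, deriv (snd \<circ> \<gamma>) t) \<noteq> (0, 0)) \<and>
     inj_on \<gamma> V \<and>
     (\<exists>U. open U \<and> \<gamma> ` V = X \<inter> U) \<and>
     continuous_on (\<gamma> ` V) (inv_into V \<gamma>)"

definition riemann_surface_in_C2 :: "(complex \<times> complex) set \<Rightarrow> bool" where
  "riemann_surface_in_C2 X \<longleftrightarrow> X \<noteq> {} \<and> connected X \<and>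
     (\<forall>p\<in>X. \<exists>\<gamma> V. chart X \<gamma> V \<and> p \<in> \<gamma> ` V)"

definition proj_proper :: "(complex \<times> complex) set \<Rightarrow> bool" where
  "proj_proper X \<longleftrightarrow> (\<forall>K. compact K \<longrightarrow> compact {z\<in>X. fst z \<in> K})"

definition closed_discrete_in :: "(complex \<times> complex) set \<Rightarrow> (complex \<times> complex) set \<Rightarrow> bool" where
  "closed_discrete_in X P \<longleftrightarrow> P \<subseteq> X \<and> closedin (top_of_set X) P \<and>
     (\<forall>p\<in>P. \<exists>e>0. ball p e \<inter> P = {p})"

definition proj_submersion_at :: "(complex \<times> complex) set \<Rightarrow> complex \<times> complex \<Rightarrow> bool" where
  "proj_submersion_at X q \<longleftrightarrow>
     (\<exists>\<gamma> V t. chart X \<gamma> V \<and> t \<in> V \<and> \<gamma> t = q \<and> deriv (fst \<circ> \<gamma>) t \<noteq> 0)"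

definition holo_on_sub :: "(complex \<times> complex) set \<Rightarrow> (complex \<times> complex) set \<Rightarrow>
    (complex \<times> complex \<Rightarrow> complex \<times> complex) \<Rightarrow> bool" where
  "holo_on_sub X Y f \<longleftrightarrow> (\<forall>\<gamma> V. chart X \<gamma> V \<longrightarrow>
     (fst \<circ> f \<circ> \<gamma>) holomorphic_on (V \<inter> \<gamma> -` Y) \<and> (snd \<circ> f \<circ> \<gamma>) holomorphic_on (V \<inter> \<gamma> -` Y))"

definition proper_holo_embedding :: "(complex \<times> complex) set \<Rightarrow> (complex \<times> complex) set \<Rightarrow>
    (complex \<times> complex \<Rightarrow> complex \<times> complex) \<Rightarrow> bool" where
  "proper_holo_embedding X Y f \<longleftrightarrow> holo_on_sub X Y f \<and> inj_on f Y \<and>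
     (\<forall>\<gamma> V t. chart X \<gamma> V \<and> t \<in> V \<and> \<gamma> t \<in> Y \<longrightarrow>
        (deriv (fst \<circ> f \<circ> \<gamma>) t, deriv (snd \<circ> f \<circ> \<gamma>) t) \<noteq> (0, 0)) \<and>
     continuous_on (f ` Y) (inv_into Y f) \<and>
     (\<forall>K. compact K \<longrightarrow> compact (Y \<inter> f -` K))"

end

theory Submission
  imports Defs
begin


lemma sparse_closed:
  fixes A :: "complex set"
  assumes "\<And>r. finite (A \<inter> cball 0 r)"
  shows "closed A"
proof (rule closed_limpt[THEN iffD2], intro allI impI)
  fix z assume "z islimpt A"
  hence "infinite (A \<inter> ball z 1)" by (simp add: islimpt_eq_infinite_ball)
  moreover have "A \<inter> ball z 1 \<subseteq> A \<inter> cball 0 (norm z + 1)"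
  proof (rule subsetI)
    fix x assume "x \<in> A \<inter> ball z 1"
    hence "x \<in> A" "x \<in> ball z 1" by auto
    have "norm x \<le> norm z + norm (x - z)" using norm_triangle_ineq[of z "x - z"] by simp
    moreover have "norm (x - z) < 1" using \<open>x \<in> ball z 1\<close> by (simp add: dist_norm norm_minus_commute)
    ultimately show "x \<in> A \<inter> cball 0 (norm z + 1)" using \<open>x \<in> A\<close> by simp
  qed
  ultimately show "z \<in> A" using assms finite_subset by blast
qed

lemma deriv_factor:
  assumes "h holomorphic_on UNIV" "\<And>w. f w = (w - a) * h w"
  shows "deriv f a = h a"
proof -
  have f: "f = (\<lambda>w. (w - a) * h w)" using assms(2) by auto
  have "(h has_field_derivative deriv h a) (at a)"
    using assms(1) by (simp add: field_differentiable_derivI holomorphic_on_imp_differentiable_at)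
  hence "((\<lambda>w. (w - a) * h w) has_field_derivative (1 * h a + (a - a) * deriv h a)) (at a)"
    by (intro derivative_eq_intros) auto
  thus ?thesis unfolding f by (simp add: DERIV_imp_deriv)
qed

lemma simple_zero_deriv:
  assumes "f holomorphic_on UNIV" "f z = 0" "zorder f z = 1" "f w \<noteq> 0"
  shows "deriv f z \<noteq> 0"
proof -
  obtain r where r: "r > 0" "zor_poly f z holomorphic_on cball z r"
    "\<forall>w\<in>cball z r. f w = zor_poly f z w * (w - z) ^ nat (zorder f z) \<and> zor_poly f z w \<noteq> 0"
    using zorder_exist_zero[of f UNIV z] assms by auto
  define h where "h = zor_poly f z"
  have hz: "h z \<noteq> 0" using r(3) \<open>r > 0\<close> by (auto simp: h_def)
  have "h field_differentiable (at z)"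
    using r(2) \<open>r > 0\<close> unfolding h_def
    by (meson centre_in_ball holomorphic_on_imp_differentiable_at holomorphic_on_subset ball_subset_cball open_ball)
  hence "(h has_field_derivative deriv h z) (at z)" by (simp add: field_differentiable_derivI)
  hence "((\<lambda>w. h w * (w - z)) has_field_derivative (deriv h z * (z - z) + h z * 1)) (at z)"
    by (intro derivative_eq_intros) auto
  hence "((\<lambda>w. h w * (w - z)) has_field_derivative h z) (at z)" by simp
  hence "(f has_field_derivative h z) (at z)"
  proof (rule has_field_derivative_transform_within_open[where S="ball z r"])
    show "z \<in> ball z r" using \<open>r > 0\<close> by simp
    show "h x * (x - z) = f x" if "x \<in> ball z r" for x
      using r(3) that assms(3) by (auto simp: h_def)
  qed auto
  thus ?thesis using hz by (simp add: DERIV_imp_deriv)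
qed



lemma exists_g:
  fixes A :: "complex set"
  assumes fin: "\<And>r. finite (A \<inter> cball 0 r)"
  obtains g where "g holomorphic_on UNIV" "\<And>z. g z = 0 \<longleftrightarrow> z \<in> A" "\<And>z. z \<in> A \<Longrightarrow> deriv g z \<noteq> 0"
proof (cases "finite A")
  case True
  define g where "g w = (\<Prod>b\<in>A. w - b)" for w
  show ?thesis
  proof (rule that)
    show "g holomorphic_on UNIV" unfolding g_def by (intro holomorphic_intros)
    show "g z = 0 \<longleftrightarrow> z \<in> A" for z unfolding g_def using True by (subst prod_zero_iff) auto
    show "deriv g z \<noteq> 0" if "z \<in> A" for z
    proof -
      have "deriv g z = (\<Prod>b\<in>A-{z}. z - b)"
        by (rule deriv_factor[where h="\<lambda>w. \<Prod>b\<in>A-{z}. w - b"])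
           (auto intro!: holomorphic_intros simp: g_def prod.remove[OF True that])
      thus ?thesis using True by simp
    qed
  qed
next
  case False
  define A' where "A' = A - {0}"
  have inf: "infinite A'" using False unfolding A'_def by (metis finite_Diff2 finite.emptyI finite_insert)
  have fin': "finite (A' \<inter> cball 0 r)" for r
    by (rule finite_subset[OF _ fin[of r]]) (auto simp: A'_def)
  have "closed A'" by (rule sparse_closed) (rule fin')
  obtain a :: "nat \<Rightarrow> complex" where a: "True" "inj a" "range a = A'" "filterlim a at_infinity at_top"
  proof (rule sequence_of_sparse_set_exists[OF inf \<open>closed A'\<close>])
    show "finite (A' \<inter> cball 0 r)" for r by (rule fin')
  qed blast
  have fo: "finite (a -` {z})" for z
    using a(2) by (simp add: finite_vimageI)
  interpret W: weierstrass_product' a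
  proof
    show "a n \<noteq> 0" for n using a(3) by (auto simp: A'_def)
    show "filterlim a at_infinity at_top" by (rule a(4))
    show "finite (a -` {z})" for z by (rule fo)
  qed
  define c where "c w = (if 0 \<in> A then w else 1)" for w :: complex
  define g where "g w = c w * W.f w" for w
  have cz: "c z = 0 \<longleftrightarrow> z = 0 \<and> 0 \<in> A" for z by (simp add: c_def)
  have hc: "c holomorphic_on UNIV" unfolding c_def by (cases "0 \<in> A") (auto intro!: holomorphic_intros)
  have ra: "z \<in> range a \<longleftrightarrow> z \<in> A \<and> z \<noteq> 0" for z using a(3) by (auto simp: A'_def)
  show ?thesis
  proof (rule that)
    show hg: "g holomorphic_on UNIV" unfolding g_def by (intro holomorphic_intros hc W.holomorphic)
    show "g z = 0 \<longleftrightarrow> z \<in> A" for z using cz[of z] W.zero[of z] ra[of z] by (auto simp: g_def)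
    show "deriv g z \<noteq> 0" if "z \<in> A" for z
    proof -
      have dW: "(W.f has_field_derivative deriv W.f z) (at z)"
        using W.holomorphic[of UNIV] by (simp add: field_differentiable_derivI holomorphic_on_imp_differentiable_at)
      have dc: "(c has_field_derivative deriv c z) (at z)"
        using hc by (simp add: field_differentiable_derivI holomorphic_on_imp_differentiable_at)
      have "(g has_field_derivative (c z * deriv W.f z + deriv c z * W.f z)) (at z)"
        unfolding g_def[abs_def] using DERIV_mult[OF dc dW] by (simp add: algebra_simps)
      hence dg: "deriv g z = c z * deriv W.f z + deriv c z * W.f z" by (simp add: DERIV_imp_deriv)
      show ?thesis
      proof (cases "z = 0")
        case True
        have "deriv g 0 = W.f 0"
          by (rule deriv_factor[where h="W.f"]) (use True that in \<open>auto simp: g_def c_def W.holomorphic[of UNIV]\<close>)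
        moreover have "W.f 0 \<noteq> 0" using W.zero[of 0] ra[of 0] by auto
        ultimately show ?thesis using True by simp
      next
        case False
        have z: "z \<in> range a" using False that ra by auto
        have "a -` {z} = {inv a z}" using a(2) z by (auto simp: inj_def f_inv_into_f)
        hence "zorder W.f z = 1" using W.zorder[of z] by simp
        moreover have "W.f 0 \<noteq> 0" using W.zero[of 0] ra[of 0] by auto
        moreover have "W.f z = 0" using W.zero z by auto
        ultimately have "deriv W.f z \<noteq> 0" using simple_zero_deriv[OF W.holomorphic[of UNIV]] by blast
        moreover have "c z \<noteq> 0" using cz False by auto
        ultimately show ?thesis using dg \<open>W.f z = 0\<close> by simp
      qed
    qed
  qed
qed




lemma exists_interp:
  fixes A :: "complex set" and g c :: "complex \<Rightarrow> complex"
  assumes fin: "\<And>r. finite (A \<inter> cball 0 r)" and hg: "g holomorphic_on UNIV"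
    and gz: "\<And>z. g z = 0 \<longleftrightarrow> z \<in> A" and dg: "\<And>z. z \<in> A \<Longrightarrow> deriv g z \<noteq> 0"
  obtains \<beta> where "\<beta> holomorphic_on UNIV" "\<And>z. z \<in> A \<Longrightarrow> \<beta> z = c z"
proof -
  define e where "e a w = (if w = a then deriv g a else g w / (w - a))" for a w
  have he: "e a holomorphic_on UNIV" if "a \<in> A" for a
  proof -
    have "(\<lambda>w. if w = a then deriv g a else (g w - g a) / (w - a)) holomorphic_on UNIV"
      by (rule pole_lemma[OF hg]) auto
    moreover have "g a = 0" using gz that by simp
    hence "(\<lambda>w. if w = a then deriv g a else (g w - g a) / (w - a)) = e a"
      by (auto simp: e_def fun_eq_iff)
    ultimately show ?thesis by simp
  qed
  have e0: "e a b = 0" if "b \<in> A" "b \<noteq> a" for a b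
    using gz[of b] that by (simp add: e_def)
  have e1: "e a a = deriv g a" for a by (simp add: e_def)
  show ?thesis
  proof (cases "finite A")
    case True
    define \<beta> where "\<beta> w = (\<Sum>a\<in>A. c a / deriv g a * e a w)" for w
    show ?thesis
    proof (rule that)
      show "\<beta> holomorphic_on UNIV" unfolding \<beta>_def
        by (intro holomorphic_on_sum holomorphic_intros he) auto
      show "\<beta> z = c z" if "z \<in> A" for z
      proof -
        have "\<beta> z = c z / deriv g z * e z z + (\<Sum>a\<in>A-{z}. c a / deriv g a * e a z)"
          unfolding \<beta>_def by (rule sum.remove[OF True that])
        also have "(\<Sum>a\<in>A-{z}. c a / deriv g a * e a z) = 0"
          by (rule sum.neutral) (use e0 that in auto)
        finally show ?thesis using dg[OF that] by (simp add: e1)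
      qed
    qed
  next
    case False
    have "closed A" by (rule sparse_closed) (rule fin)
    obtain a :: "nat \<Rightarrow> complex" where a: "inj a" "range a = A" "filterlim a at_infinity at_top"
    proof (rule sequence_of_sparse_set_exists[OF False \<open>closed A\<close>])
      show "finite (A \<inter> cball 0 r)" for r by (rule fin)
    qed blast
    have aA: "a n \<in> A" for n using a(2) by auto
    have "\<exists>B. B \<ge> 0 \<and> (\<forall>w\<in>cball 0 (norm (a n) / 2). norm (g w) \<le> B)" for n
    proof -
      have "compact (g ` cball 0 (norm (a n) / 2))"
        by (intro compact_continuous_image holomorphic_on_imp_continuous_on holomorphic_on_subset[OF hg]) auto
      then obtain B where "\<forall>x\<in>g ` cball 0 (norm (a n) / 2). norm x \<le> B"
        using compact_imp_bounded bounded_iff by metis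
      thus ?thesis by (intro exI[of _ "max B 0"]) auto
    qed
    then obtain B where B: "\<And>n. B n \<ge> 0" "\<And>n w. w \<in> cball 0 (norm (a n) / 2) \<Longrightarrow> norm (g w) \<le> B n"
      by metis
    define C where "C n = norm (c (a n) / deriv g (a n)) * B n * 2 / norm (a n)" for n
    have "\<exists>k. C n * (1/2) ^ k \<le> (1/2) ^ n" for n
    proof -
      have "((\<lambda>k. C n * (1/2) ^ k) \<longlongrightarrow> C n * 0) sequentially"
        by (intro tendsto_mult tendsto_const LIMSEQ_realpow_zero) auto
      hence "eventually (\<lambda>k. C n * (1/2) ^ k < (1/2) ^ n) sequentially"
        by (rule order_tendstoD) simp
      thus ?thesis by (metis (mono_tags, lifting) eventually_sequentially le_refl less_imp_le)
    qed
    then obtain k where k: "\<And>n. C n * (1/2) ^ k n \<le> (1/2) ^ n" by metis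
    define m where "m n w = (if a n = 0 then 1 else (w / a n) ^ k n)" for n w
    define t where "t n w = c (a n) / deriv g (a n) * e (a n) w * m n w" for n w
    define \<beta> where "\<beta> w = suminf (\<lambda>n. t n w)" for w
    have ht: "t n holomorphic_on UNIV" for n
      unfolding t_def m_def by (cases "a n = 0") (auto intro!: holomorphic_intros he aA, metis aA)
    have ulim: "uniform_limit (cball 0 R) (\<lambda>n w. \<Sum>i<n. t i w) \<beta> sequentially" for R
      unfolding \<beta>_def
    proof (rule Weierstrass_m_test_ev[where M="\<lambda>n. (1/2) ^ n"])
      have "eventually (\<lambda>n. norm (a n) \<ge> 2 * \<bar>R\<bar> + 1) sequentially"
        using filterlim_at_infinity_imp_norm_at_top[OF a(3)] unfolding filterlim_at_top by blast
      thus "eventually (\<lambda>n. \<forall>w\<in>cball 0 R. norm (t n w) \<le> (1/2) ^ n) sequentially"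
      proof eventually_elim
        case (elim n)
        show ?case
        proof
          fix w :: complex assume w: "w \<in> cball 0 R"
          have an: "a n \<noteq> 0" "norm (a n) > 0" using elim by auto
          have nw: "norm w \<le> norm (a n) / 2" using w elim by auto
          have wa: "w \<noteq> a n" using nw an by auto
          have "norm (a n) \<le> norm w + norm (w - a n)"
            using norm_triangle_ineq[of w "a n - w"] by (simp add: norm_minus_commute)
          hence d: "norm (w - a n) \<ge> norm (a n) / 2" using nw by simp
          have "norm (e (a n) w) = norm (g w) / norm (w - a n)" using wa by (simp add: e_def norm_divide)
          also have "\<dots> \<le> B n / (norm (a n) / 2)"
            by (intro frac_le B) (use d an nw in auto)
          finally have ne: "norm (e (a n) w) \<le> 2 * B n / norm (a n)" by (simp add: mult.commute)
          have "norm (m n w) = (norm w / norm (a n)) ^ k n" using an by (simp add: m_def norm_power norm_divide)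
          also have "\<dots> \<le> (1/2) ^ k n"
            by (intro power_mono) (use nw an in \<open>auto simp: field_simps\<close>)
          finally have nm: "norm (m n w) \<le> (1/2) ^ k n" .
          have "norm (t n w) = norm (c (a n) / deriv g (a n)) * norm (e (a n) w) * norm (m n w)"
            unfolding t_def by (simp only: norm_mult)
          also have "\<dots> \<le> norm (c (a n) / deriv g (a n)) * (2 * B n / norm (a n)) * (1/2) ^ k n"
            by (intro mult_mono mult_left_mono ne nm) (use B(1) an in auto)
          also have "\<dots> = C n * (1/2) ^ k n" by (simp add: C_def)
          also have "\<dots> \<le> (1/2) ^ n" by (rule k)
          finally show "norm (t n w) \<le> (1/2) ^ n" .
        qed
      qed
      show "summable (\<lambda>n. (1/2::real) ^ n)" by (rule summable_geometric) simp
    qed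
    show ?thesis
    proof (rule that)
      show "\<beta> holomorphic_on UNIV"
      proof (rule holomorphic_uniform_sequence[where f="\<lambda>n w. \<Sum>i<n. t i w"])
        show "(\<lambda>w. \<Sum>i<n. t i w) holomorphic_on UNIV" for n
          by (intro holomorphic_on_sum ht)
        fix x :: complex
        have "uniform_limit (cball x 1) (\<lambda>n w. \<Sum>i<n. t i w) \<beta> sequentially"
          by (rule uniform_limit_on_subset[OF ulim[of "norm x + 1"]])
             (auto simp: dist_norm, metis add_mono norm_minus_commute norm_triangle_sub order_refl order_trans)
        thus "\<exists>d>0. cball x d \<subseteq> UNIV \<and> uniform_limit (cball x d) (\<lambda>n w. \<Sum>i<n. t i w) \<beta> sequentially"
          by (intro exI[of _ 1]) auto
      qed auto
      show "\<beta> z = c z" if zA: "z \<in> A" for z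
      proof -
        obtain j where j: "z = a j" using zA a(2) by auto
        have "\<beta> z = (\<Sum>n\<in>{j}. t n z)" unfolding \<beta>_def
        proof (rule suminf_finite)
          show "t n z = 0" if "n \<notin> {j}" for n
          proof -
            have "a n \<noteq> a j" using that a(1) by (auto simp: inj_def)
            thus ?thesis using e0[of z "a n"] \<open>z \<in> A\<close> j by (simp add: t_def)
          qed
        qed auto
        also have "\<dots> = c z" using dg[OF zA] j by (simp add: t_def e1 m_def)
        finally show ?thesis .
      qed
    qed
  qed
qed




lemma chart_cont: "chart X \<gamma> V \<Longrightarrow> continuous_on V \<gamma>"
proof -
  assume c: "chart X \<gamma> V"
  have "continuous_on V (\<lambda>t. ((fst \<circ> \<gamma>) t, (snd \<circ> \<gamma>) t))"
    using c by (intro continuous_on_Pair holomorphic_on_imp_continuous_on) (auto simp: chart_def o_def)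
  thus ?thesis by simp
qed

lemma chart_sub: "chart X \<gamma> V \<Longrightarrow> \<gamma> ` V \<subseteq> X"
  unfolding chart_def by auto

lemma chart_mem: "chart X \<gamma> V \<Longrightarrow> t \<in> V \<Longrightarrow> \<gamma> t \<in> X"
  unfolding chart_def by auto

locale emb_setup =
  fixes X P :: "(complex \<times> complex) set" and g \<beta> :: "complex \<Rightarrow> complex"
  assumes rs: "riemann_surface_in_C2 X" and pp: "proj_proper X" and cd: "closed_discrete_in X P"
    and hg: "g holomorphic_on UNIV" and hb: "\<beta> holomorphic_on UNIV"
    and gev: "\<And>a. eventually (\<lambda>x. g x \<noteq> 0) (at a)"
    and dg: "\<And>a. g a = 0 \<Longrightarrow> deriv g a \<noteq> 0"
    and K1: "\<And>p. p \<in> P \<Longrightarrow> g (fst p) = 0 \<and> \<beta> (fst p) \<noteq> snd p"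
    and K2: "\<And>z. z \<in> X - P \<Longrightarrow> g (fst z) = 0 \<Longrightarrow>
              \<beta> (fst z) = snd z \<and> proj_submersion_at X z \<and> (\<forall>z'\<in>X-P. fst z' = fst z \<longrightarrow> z' = z)"
begin

definition "G0 w = (snd w - \<beta> (fst w)) / g (fst w)"
definition "G w = (if g (fst w) \<noteq> 0 then G0 w else Lim (at w within X) G0)"
definition "F w = (fst w, G w)"

lemma P_sub: "P \<subseteq> X" using cd by (simp add: closed_discrete_in_def)

lemma obtain_T: obtains T where "closed T" "P = X \<inter> T"
  using cd by (auto simp: closed_discrete_in_def closedin_closed)

lemma open_chart_Y: assumes "chart X \<gamma> V" shows "open (V \<inter> \<gamma> -` (X - P))"
proof -
  obtain T where T: "closed T" "P = X \<inter> T" by (rule obtain_T)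
  have "V \<inter> \<gamma> -` (X - P) = V \<inter> \<gamma> -` (- T)" using chart_sub[OF assms] T by auto
  moreover have "open (V \<inter> \<gamma> -` (- T))"
    using continuous_open_preimage[OF chart_cont[OF assms]] assms T by (auto simp: chart_def)
  ultimately show ?thesis by simp
qed

lemma ev_notP: assumes "q \<in> X - P" shows "eventually (\<lambda>w. w \<notin> P) (nhds q)"
proof -
  obtain T where T: "closed T" "P = X \<inter> T" by (rule obtain_T)
  have "eventually (\<lambda>w. w \<in> - T) (nhds q)"
    using T assms by (intro eventually_nhds_in_open) auto
  thus ?thesis by eventually_elim (use T in auto)
qed

lemma ev_g_fst: "eventually (\<lambda>w. fst w \<noteq> fst q \<longrightarrow> g (fst w) \<noteq> 0) (nhds q)"
proof -
  have "eventually (\<lambda>x. x \<noteq> fst q \<longrightarrow> g x \<noteq> 0) (nhds (fst q))"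
    using gev[of "fst q"] by (simp add: eventually_at_filter)
  moreover have "filterlim fst (nhds (fst q)) (nhds q)"
    by (intro tendsto_fst filterlim_ident)
  hence "\<forall>R. eventually R (nhds (fst q)) \<longrightarrow> eventually (\<lambda>x. R (fst x)) (nhds q)"
    unfolding filterlim_iff .
  from spec[OF this, of "\<lambda>x. x \<noteq> fst q \<longrightarrow> g x \<noteq> 0"] calculation
  show ?thesis by simp
qed

lemma ev_special:
  assumes q: "q \<in> X - P" "g (fst q) = 0"
  shows "eventually (\<lambda>w. w \<in> X \<longrightarrow> w \<noteq> q \<longrightarrow> w \<notin> P \<and> g (fst w) \<noteq> 0) (nhds q)"
  using ev_notP[OF q(1)] ev_g_fst[of q]
proof eventually_elim
  case (elim w)
  show ?case
  proof (intro impI conjI)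
    assume w: "w \<in> X" "w \<noteq> q"
    show "w \<notin> P" using elim by auto
    show "g (fst w) \<noteq> 0"
    proof
      assume "g (fst w) = 0"
      hence "fst w = fst q" using elim by auto
      thus False using K2[OF q] w elim by auto
    qed
  qed
qed

lemma cg: "isCont g x"
  using hg by (metis holomorphic_on_imp_continuous_on continuous_on_eq_continuous_at open_UNIV UNIV_I)

lemma cb: "isCont \<beta> x"
  using hb by (metis holomorphic_on_imp_continuous_on continuous_on_eq_continuous_at open_UNIV UNIV_I)

lemma ev_regular:
  fixes w0 :: "complex \<times> complex"
  assumes "g (fst w0) \<noteq> 0" shows "eventually (\<lambda>w. g (fst w) \<noteq> 0) (nhds w0)"
proof -
  have "isCont (\<lambda>w. g (fst w)) w0" by (intro isCont_o2[OF isCont_fst cg]) (rule continuous_ident)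
  hence "eventually (\<lambda>w. g (fst w) \<noteq> 0) (at w0)"
    using tendsto_imp_eventually_ne assms unfolding isCont_def by blast
  thus ?thesis using assms by (auto simp: eventually_at_filter elim: eventually_mono)
qed

end



lemma chart_filterlim:
  assumes c: "chart X \<gamma> V" and t0: "t0 \<in> V"
  shows "filterlim \<gamma> (at (\<gamma> t0) within X) (at t0)"
  unfolding filterlim_at
proof
  have ov: "open V" using c by (simp add: chart_def)
  have ev: "eventually (\<lambda>t. t \<in> V) (at t0)" using ov t0 by (rule eventually_at_in_open')
  thus "eventually (\<lambda>t. \<gamma> t \<in> X \<and> \<gamma> t \<noteq> \<gamma> t0) (at t0)"
  proof (rule eventually_mono[OF eventually_conj[OF _ eventually_neq_at_within[of t0]]])
    fix t assume "t \<in> V \<and> t \<noteq> t0"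
    thus "\<gamma> t \<in> X \<and> \<gamma> t \<noteq> \<gamma> t0" using c t0 by (auto simp: chart_def inj_on_def)
  qed
  have "continuous_on V \<gamma>" by (rule chart_cont[OF c])
  hence "isCont \<gamma> t0" using ov t0 by (simp add: continuous_on_eq_continuous_at)
  thus "(\<gamma> \<longlongrightarrow> \<gamma> t0) (at t0)" by (simp add: isCont_def)
qed

lemma chart_at_nontriv:
  assumes c: "chart X \<gamma> V" and t0: "t0 \<in> V"
  shows "at (\<gamma> t0) within X \<noteq> bot"
proof
  assume "at (\<gamma> t0) within X = bot"
  with chart_filterlim[OF assms] have "filterlim \<gamma> bot (at t0)" by simp
  hence "at t0 = (bot :: complex filter)" by (simp add: filterlim_def bot_unique filtermap_bot_iff)
  thus False by simp
qed

context emb_setup begin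

lemma lim_special:
  assumes q: "q \<in> X - P" "g (fst q) = 0"
  shows "(G0 \<longlongrightarrow> G q) (at q within X)" "at q within X \<noteq> bot"
proof -
  obtain \<gamma>1 V1 s0 where c1: "chart X \<gamma>1 V1" and s0: "s0 \<in> V1" "\<gamma>1 s0 = q"
    and dx: "deriv (fst \<circ> \<gamma>1) s0 \<noteq> 0"
    using K2[OF q] unfolding proj_submersion_at_def by blast
  obtain U1 where U1: "open U1" "\<gamma>1 ` V1 = X \<inter> U1" using c1 unfolding chart_def by blast
  have ov: "open V1" and hx: "(fst \<circ> \<gamma>1) holomorphic_on V1" and hy: "(snd \<circ> \<gamma>1) holomorphic_on V1"
    and inj1: "inj_on \<gamma>1 V1" and ci: "continuous_on (\<gamma>1 ` V1) (inv_into V1 \<gamma>1)"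
    using c1 by (auto simp: chart_def)
  show nt: "at q within X \<noteq> bot" using chart_at_nontriv[OF c1 s0(1)] s0 by simp
  define a where "a = fst q"
  define N where "N s = snd (\<gamma>1 s) - \<beta> (fst (\<gamma>1 s))" for s
  define D where "D s = g (fst (\<gamma>1 s))" for s
  have dX: "((fst \<circ> \<gamma>1) has_field_derivative deriv (fst \<circ> \<gamma>1) s0) (at s0)"
    using hx ov s0 by (simp add: holomorphic_derivI)
  have dY: "((snd \<circ> \<gamma>1) has_field_derivative deriv (snd \<circ> \<gamma>1) s0) (at s0)"
    using hy ov s0 by (simp add: holomorphic_derivI)
  have dB: "(\<beta> has_field_derivative deriv \<beta> x) (at x)" for x
    using hb by (simp add: holomorphic_derivI)
  have dG: "(g has_field_derivative deriv g x) (at x)" for x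
    using hg by (simp add: holomorphic_derivI)
  have fq: "fst (\<gamma>1 s0) = a" using s0 by (simp add: a_def)
  have dN: "(N has_field_derivative (deriv (snd \<circ> \<gamma>1) s0 - deriv \<beta> a * deriv (fst \<circ> \<gamma>1) s0)) (at s0)"
    unfolding N_def using DERIV_diff[OF dY DERIV_chain[OF dB dX]] fq by (simp add: o_def)
  have dD: "(D has_field_derivative (deriv g a * deriv (fst \<circ> \<gamma>1) s0)) (at s0)"
    unfolding D_def using DERIV_chain[OF dG dX] fq by (simp add: o_def)
  have N0: "N s0 = 0" using K2[OF q] s0 by (simp add: N_def)
  have D0: "D s0 = 0" using q s0 by (simp add: D_def)
  define L where "L = (deriv (snd \<circ> \<gamma>1) s0 - deriv \<beta> a * deriv (fst \<circ> \<gamma>1) s0) / (deriv g a * deriv (fst \<circ> \<gamma>1) s0)"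
  have lim1: "((\<lambda>s. N s / D s) \<longlongrightarrow> L) (at s0)"
    by (rule lhopital_complex_simple[OF dN dD N0 D0]) (use dg[of a] q dx in \<open>auto simp: a_def L_def\<close>)
  define \<iota> where "\<iota> = inv_into V1 \<gamma>1"
  have ati: "at q within X = at q within (\<gamma>1 ` V1)"
    by (rule at_within_nhd[of _ U1]) (use U1 s0 in auto)
  have qin: "q \<in> \<gamma>1 ` V1" using s0 by auto
  have iq: "\<iota> q = s0" using s0 inj1 by (auto simp: \<iota>_def inv_into_f_f)
  have "(\<iota> \<longlongrightarrow> s0) (at q within (\<gamma>1 ` V1))"
    using ci qin iq unfolding \<iota>_def continuous_on_def by auto
  moreover have "eventually (\<lambda>w. \<iota> w \<noteq> s0) (at q within (\<gamma>1 ` V1))"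
    unfolding eventually_at_filter
  proof (rule always_eventually, intro allI impI)
    fix w assume "w \<noteq> q" "w \<in> \<gamma>1 ` V1"
    thus "\<iota> w \<noteq> s0" using s0 by (auto simp: \<iota>_def f_inv_into_f)
  qed
  ultimately have fi: "filterlim \<iota> (at s0) (at q within (\<gamma>1 ` V1))" by (rule filterlim_atI)
  have "((\<lambda>w. N (\<iota> w) / D (\<iota> w)) \<longlongrightarrow> L) (at q within (\<gamma>1 ` V1))"
    using filterlim_compose[OF lim1 fi] by simp
  moreover have "eventually (\<lambda>w. N (\<iota> w) / D (\<iota> w) = G0 w) (at q within (\<gamma>1 ` V1))"
    unfolding eventually_at_filter
  proof (rule always_eventually, intro allI impI)
    fix w assume "w \<noteq> q" "w \<in> \<gamma>1 ` V1"
    hence "\<gamma>1 (\<iota> w) = w" by (auto simp: \<iota>_def f_inv_into_f)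
    thus "N (\<iota> w) / D (\<iota> w) = G0 w" by (simp add: N_def D_def G0_def)
  qed
  ultimately have "(G0 \<longlongrightarrow> L) (at q within (\<gamma>1 ` V1))" by (rule Lim_transform_eventually)
  hence limL: "(G0 \<longlongrightarrow> L) (at q within X)" using ati by simp
  have "G q = Lim (at q within X) G0" using q by (simp add: G_def)
  also have "\<dots> = L" using tendsto_Lim[OF nt limL] by simp
  finally show "(G0 \<longlongrightarrow> G q) (at q within X)" using limL by simp
qed

lemma G_cont_special:
  assumes q: "q \<in> X - P" "g (fst q) = 0"
  shows "(G \<longlongrightarrow> G q) (at q within X)"
proof -
  have "eventually (\<lambda>w. G0 w = G w) (at q within X)"
    unfolding eventually_at_filter
    using ev_special[OF q] by eventually_elim (auto simp: G_def)
  thus ?thesis using lim_special(1)[OF q] by (rule Lim_transform_eventually[rotated])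
qed

end



context emb_setup begin

lemma G_cont_at:
  assumes w0: "w0 \<in> X - P"
  shows "(G \<longlongrightarrow> G w0) (at w0 within X)"
proof (cases "g (fst w0) = 0")
  case True
  thus ?thesis using G_cont_special[OF w0] by simp
next
  case False
  have "isCont G0 w0" unfolding G0_def
    by (intro continuous_intros isCont_o2[OF isCont_fst cb] isCont_o2[OF isCont_fst cg] False)
  hence "(G0 \<longlongrightarrow> G0 w0) (at w0)" by (simp add: isCont_def)
  moreover have "eventually (\<lambda>w. G0 w = G w) (at w0)"
    using ev_regular[OF False] unfolding eventually_at_filter
    by eventually_elim (auto simp: G_def)
  ultimately have "(G \<longlongrightarrow> G0 w0) (at w0)" by (rule Lim_transform_eventually)
  hence "(G \<longlongrightarrow> G w0) (at w0)" using False by (simp add: G_def)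
  thus ?thesis by (rule tendsto_within_subset) simp
qed

lemma G_continuous_on: "continuous_on (X - P) G"
  unfolding continuous_on_def
  using G_cont_at by (auto intro: tendsto_within_subset)

lemma chart_isCont: "chart X \<gamma> V \<Longrightarrow> t \<in> V \<Longrightarrow> isCont \<gamma> t"
  using chart_cont[of X \<gamma> V] by (auto simp: chart_def continuous_on_eq_continuous_at)

lemma deriv_regular:
  assumes c: "chart X \<gamma> V" and t: "t \<in> V" and gt: "g (fst (\<gamma> t)) \<noteq> 0"
  shows "((\<lambda>s. G (\<gamma> s)) has_field_derivative
     (((deriv (snd \<circ> \<gamma>) t - deriv \<beta> (fst (\<gamma> t)) * deriv (fst \<circ> \<gamma>) t) * g (fst (\<gamma> t))
        - (snd (\<gamma> t) - \<beta> (fst (\<gamma> t))) * (deriv g (fst (\<gamma> t)) * deriv (fst \<circ> \<gamma>) t))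
      / (g (fst (\<gamma> t)) * g (fst (\<gamma> t))))) (at t)"
proof -
  have ov: "open V" and hx: "(fst \<circ> \<gamma>) holomorphic_on V" and hy: "(snd \<circ> \<gamma>) holomorphic_on V"
    using c by (auto simp: chart_def)
  have dX: "((fst \<circ> \<gamma>) has_field_derivative deriv (fst \<circ> \<gamma>) t) (at t)"
    using hx ov t by (simp add: holomorphic_derivI)
  have dY: "((snd \<circ> \<gamma>) has_field_derivative deriv (snd \<circ> \<gamma>) t) (at t)"
    using hy ov t by (simp add: holomorphic_derivI)
  have dB: "(\<beta> has_field_derivative deriv \<beta> x) (at x)" for x
    using hb by (simp add: holomorphic_derivI)
  have dG: "(g has_field_derivative deriv g x) (at x)" for x
    using hg by (simp add: holomorphic_derivI)
  have dN: "((\<lambda>s. snd (\<gamma> s) - \<beta> (fst (\<gamma> s))) has_field_derivative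
      (deriv (snd \<circ> \<gamma>) t - deriv \<beta> (fst (\<gamma> t)) * deriv (fst \<circ> \<gamma>) t)) (at t)"
    using DERIV_diff[OF dY DERIV_chain[OF dB dX]] by (simp add: o_def)
  have dD: "((\<lambda>s. g (fst (\<gamma> s))) has_field_derivative (deriv g (fst (\<gamma> t)) * deriv (fst \<circ> \<gamma>) t)) (at t)"
    using DERIV_chain[OF dG dX] by (simp add: o_def)
  have dQ: "((\<lambda>s. G0 (\<gamma> s)) has_field_derivative
     (((deriv (snd \<circ> \<gamma>) t - deriv \<beta> (fst (\<gamma> t)) * deriv (fst \<circ> \<gamma>) t) * g (fst (\<gamma> t))
        - (snd (\<gamma> t) - \<beta> (fst (\<gamma> t))) * (deriv g (fst (\<gamma> t)) * deriv (fst \<circ> \<gamma>) t))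
      / (g (fst (\<gamma> t)) * g (fst (\<gamma> t))))) (at t)"
    unfolding G0_def using DERIV_divide[OF dN dD gt] by simp
  have "isCont (\<lambda>s. g (fst (\<gamma> s))) t"
    by (intro isCont_o2[OF _ cg] isCont_o2[OF _ isCont_fst] chart_isCont[OF c t] continuous_ident)
  hence "eventually (\<lambda>s. g (fst (\<gamma> s)) \<noteq> 0) (at t)"
    using tendsto_imp_eventually_ne gt unfolding isCont_def by blast
  hence ev: "eventually (\<lambda>s. g (fst (\<gamma> s)) \<noteq> 0) (nhds t)"
    using gt by (auto simp: eventually_at_filter elim: eventually_mono)
  show ?thesis
    by (rule has_field_derivative_cong_ev[THEN iffD1, OF refl _ refl refl _ dQ])
       (use ev in \<open>auto elim!: eventually_mono simp: G_def\<close>)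
qed

lemma diff_chart:
  assumes c: "chart X \<gamma> V" and t0: "t0 \<in> V" "\<gamma> t0 \<in> X - P"
  shows "(\<lambda>s. G (\<gamma> s)) field_differentiable (at t0)"
proof (cases "g (fst (\<gamma> t0)) = 0")
  case False
  thus ?thesis using deriv_regular[OF c t0(1) False] field_differentiable_def by blast
next
  case True
  define q where "q = \<gamma> t0"
  have q: "q \<in> X - P" "g (fst q) = 0" using t0 True by (auto simp: q_def)
  define W where "W = V \<inter> \<gamma> -` (X - P)"
  have oW: "open W" unfolding W_def by (rule open_chart_Y[OF c])
  have t0W: "t0 \<in> W" using t0 by (simp add: W_def)
  have fl: "filterlim \<gamma> (at q within X) (at t0)" unfolding q_def by (rule chart_filterlim[OF c t0(1)])
  have "eventually (\<lambda>w. w \<in> X \<and> w \<noteq> q) (at q within X)"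
    by (auto simp: eventually_at_filter)
  moreover have "eventually (\<lambda>w. w \<in> X \<longrightarrow> w \<noteq> q \<longrightarrow> w \<notin> P \<and> g (fst w) \<noteq> 0) (at q within X)"
    using ev_special[OF q] by (auto simp: eventually_at_filter elim: eventually_mono)
  ultimately have "eventually (\<lambda>w. g (fst w) \<noteq> 0) (at q within X)"
    by eventually_elim auto
  hence "eventually (\<lambda>s. g (fst (\<gamma> s)) \<noteq> 0) (at t0)"
    using fl by (rule eventually_compose_filterlim)
  moreover have "eventually (\<lambda>s. s \<in> W) (at t0)" using oW t0W by (rule eventually_at_in_open')
  ultimately have "eventually (\<lambda>s. g (fst (\<gamma> s)) \<noteq> 0 \<and> s \<in> W) (at t0)" by eventually_elim auto
  then obtain d where d: "d > 0" "\<And>s. s \<noteq> t0 \<Longrightarrow> dist s t0 < d \<Longrightarrow> g (fst (\<gamma> s)) \<noteq> 0 \<and> s \<in> W"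
    unfolding eventually_at by auto
  define B where "B = ball t0 d"
  have BW: "B \<subseteq> W"
  proof
    fix s assume "s \<in> B"
    thus "s \<in> W" using d(2)[of s] t0W by (cases "s = t0") (auto simp: B_def dist_commute)
  qed
  have hB: "(\<lambda>s. G (\<gamma> s)) holomorphic_on (B - {t0})"
    unfolding holomorphic_on_def
  proof
    fix s assume s: "s \<in> B - {t0}"
    have "s \<in> V" "g (fst (\<gamma> s)) \<noteq> 0" using d s BW by (auto simp: B_def W_def dist_commute)
    hence "(\<lambda>s. G (\<gamma> s)) field_differentiable (at s)"
      using deriv_regular[OF c] field_differentiable_def by blast
    thus "(\<lambda>s. G (\<gamma> s)) field_differentiable (at s within B - {t0})"
      by (rule field_differentiable_at_within)
  qed
  have "((\<lambda>s. G (\<gamma> s)) \<longlongrightarrow> G q) (at t0)"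
    using filterlim_compose[OF G_cont_special[OF q] fl] by simp
  hence "((\<lambda>s. G (\<gamma> s)) \<longlongrightarrow> G (\<gamma> t0)) (at t0 within B)"
    unfolding q_def by (rule tendsto_within_subset) simp
  hence "(\<lambda>s. G (\<gamma> s)) holomorphic_on B"
    by (intro no_isolated_singularity'[OF _ hB]) (auto simp: B_def)
  thus ?thesis using d by (intro holomorphic_on_imp_differentiable_at[of _ B]) (auto simp: B_def)
qed

lemma holo_chart:
  assumes c: "chart X \<gamma> V"
  shows "(\<lambda>s. G (\<gamma> s)) holomorphic_on (V \<inter> \<gamma> -` (X - P))"
  unfolding holomorphic_on_def
  using diff_chart[OF c] field_differentiable_at_within by blast

end



context emb_setup begin

lemma special_submersion:
  assumes c: "chart X \<gamma> V" and t0: "t0 \<in> V" and q: "\<gamma> t0 \<in> X - P" "g (fst (\<gamma> t0)) = 0"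
  shows "deriv (fst \<circ> \<gamma>) t0 \<noteq> 0"
proof -
  obtain \<gamma>1 V1 s0 where c1: "chart X \<gamma>1 V1" and s0: "s0 \<in> V1" "\<gamma>1 s0 = \<gamma> t0"
    and dx: "deriv (fst \<circ> \<gamma>1) s0 \<noteq> 0"
    using K2[OF q] unfolding proj_submersion_at_def by blast
  obtain U1 where U1: "open U1" "\<gamma>1 ` V1 = X \<inter> U1" using c1 unfolding chart_def by blast
  have ov1: "open V1" and hx1: "(fst \<circ> \<gamma>1) holomorphic_on V1"
    and inj1: "inj_on \<gamma>1 V1" and ci: "continuous_on (\<gamma>1 ` V1) (inv_into V1 \<gamma>1)"
    using c1 by (auto simp: chart_def)
  obtain r1 where r1: "r1 > 0" "ball s0 r1 \<subseteq> V1" "inj_on (fst \<circ> \<gamma>1) (ball s0 r1)"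
    using has_complex_derivative_locally_injective[OF hx1 s0(1) ov1 dx] by blast
  define \<iota> where "\<iota> = inv_into V1 \<gamma>1"
  obtain A where A: "open A" "A \<inter> \<gamma>1 ` V1 = \<iota> -` ball s0 r1 \<inter> \<gamma>1 ` V1"
    using ci unfolding continuous_on_open_invariant \<iota>_def by (meson open_ball)
  define U2 where "U2 = A \<inter> U1"
  have oU2: "open U2" unfolding U2_def using A(1) U1(1) by (rule open_Int)
  have iq: "\<iota> (\<gamma> t0) = s0" using s0 inj1 by (metis \<iota>_def inv_into_f_f)
  have qU2: "\<gamma> t0 \<in> U2"
  proof -
    have "\<gamma> t0 \<in> \<gamma>1 ` V1" using s0 by (metis image_eqI)
    moreover hence "\<gamma> t0 \<in> \<iota> -` ball s0 r1" using iq r1 by simp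
    ultimately show ?thesis using A U1 by (auto simp: U2_def)
  qed
  have U2prop: "\<iota> w \<in> ball s0 r1 \<and> \<gamma>1 (\<iota> w) = w" if "w \<in> X" "w \<in> U2" for w
  proof -
    have w1: "w \<in> \<gamma>1 ` V1" using that U1 by (auto simp: U2_def)
    hence "w \<in> A \<inter> \<gamma>1 ` V1" using that by (auto simp: U2_def)
    hence "\<iota> w \<in> ball s0 r1" using A by auto
    moreover have "\<gamma>1 (\<iota> w) = w" using w1 by (simp add: \<iota>_def f_inv_into_f)
    ultimately show ?thesis by simp
  qed
  have ov: "open V" and hx: "(fst \<circ> \<gamma>) holomorphic_on V" and inj: "inj_on \<gamma> V"
    using c by (auto simp: chart_def)
  have "(\<gamma> \<longlongrightarrow> \<gamma> t0) (at t0)" using chart_isCont[OF c t0] by (simp add: isCont_def)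
  hence "eventually (\<lambda>s. \<gamma> s \<in> U2) (at t0)" using oU2 qU2 by (rule topological_tendstoD)
  moreover have "eventually (\<lambda>s. s \<in> V) (at t0)" using ov t0 by (rule eventually_at_in_open')
  ultimately have "eventually (\<lambda>s. \<gamma> s \<in> U2 \<and> s \<in> V) (at t0)" by eventually_elim auto
  hence "eventually (\<lambda>s. \<gamma> s \<in> U2 \<and> s \<in> V) (nhds t0)"
    using qU2 t0 by (auto simp: eventually_at_filter elim: eventually_mono)
  then obtain r where r: "r > 0" "\<And>s. dist s t0 < r \<Longrightarrow> \<gamma> s \<in> U2 \<and> s \<in> V"
    unfolding eventually_nhds_metric by (auto simp: dist_commute)
  have bV: "ball t0 r \<subseteq> V" using r by (auto simp: dist_commute)
  have "inj_on (fst \<circ> \<gamma>) (ball t0 r)"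
  proof (rule inj_onI)
    fix s s' assume s: "s \<in> ball t0 r" "s' \<in> ball t0 r" and eq: "(fst \<circ> \<gamma>) s = (fst \<circ> \<gamma>) s'"
    have sV: "s \<in> V" "s' \<in> V" "\<gamma> s \<in> U2" "\<gamma> s' \<in> U2" using r s by (auto simp: dist_commute)
    have X: "\<gamma> s \<in> X" "\<gamma> s' \<in> X" using sV chart_mem[OF c] by auto
    note a = U2prop[OF X(1) sV(3)] and b = U2prop[OF X(2) sV(4)]
    have "(fst \<circ> \<gamma>1) (\<iota> (\<gamma> s)) = (fst \<circ> \<gamma>1) (\<iota> (\<gamma> s'))" using a b eq by simp
    hence "\<iota> (\<gamma> s) = \<iota> (\<gamma> s')" using r1(3) a b by (meson inj_onD)
    hence "\<gamma> s = \<gamma> s'" using a b by metis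
    thus "s = s'" using inj sV by (meson inj_onD)
  qed
  thus ?thesis
    using holomorphic_injective_imp_regular[of "fst \<circ> \<gamma>" "ball t0 r" t0] holomorphic_on_subset[OF hx bV] r
    by simp
qed

lemma fstF: "fst \<circ> F \<circ> \<gamma> = fst \<circ> \<gamma>" by (auto simp: F_def)
lemma sndF: "snd \<circ> F \<circ> \<gamma> = (\<lambda>s. G (\<gamma> s))" by (auto simp: F_def)

lemma immersion:
  assumes c: "chart X \<gamma> V" and t: "t \<in> V" and Y: "\<gamma> t \<in> X - P"
  shows "(deriv (fst \<circ> F \<circ> \<gamma>) t, deriv (snd \<circ> F \<circ> \<gamma>) t) \<noteq> (0, 0)"
proof (cases "deriv (fst \<circ> \<gamma>) t = 0")
  case False
  thus ?thesis by (simp add: fstF)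
next
  case True
  have dy: "deriv (snd \<circ> \<gamma>) t \<noteq> 0" using c t True by (auto simp: chart_def)
  have gt: "g (fst (\<gamma> t)) \<noteq> 0" using special_submersion[OF c t Y] True by auto
  have "deriv (\<lambda>s. G (\<gamma> s)) t = deriv (snd \<circ> \<gamma>) t / g (fst (\<gamma> t))"
    using DERIV_imp_deriv[OF deriv_regular[OF c t gt]] True gt by (simp add: field_simps)
  thus ?thesis using dy gt by (simp add: sndF)
qed

lemma inj_F: "inj_on F (X - P)"
proof (rule inj_onI)
  fix z z' assume z: "z \<in> X - P" "z' \<in> X - P" and eq: "F z = F z'"
  have f: "fst z = fst z'" and gg: "G z = G z'" using eq by (auto simp: F_def)
  show "z = z'"
  proof (cases "g (fst z) = 0")
    case True
    thus ?thesis using K2[OF z(1)] z(2) f by auto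
  next
    case False
    hence "G0 z = G0 z'" using gg f by (simp add: G_def)
    hence "snd z - \<beta> (fst z) = snd z' - \<beta> (fst z)" using False f by (simp add: G0_def)
    hence "snd z = snd z'" by simp
    thus ?thesis using f by (simp add: prod_eq_iff)
  qed
qed

end



context emb_setup begin

lemma F_continuous_on: "continuous_on (X - P) F"
  unfolding F_def[abs_def] by (intro continuous_on_Pair continuous_on_fst continuous_on_id G_continuous_on)

lemma ev_nonspecial:
  assumes l: "l \<in> P"
  shows "eventually (\<lambda>w. w \<in> X - P \<longrightarrow> g (fst w) \<noteq> 0) (nhds l)"
proof (cases "\<exists>q\<in>X-P. fst q = fst l")
  case True
  then obtain q where q: "q \<in> X - P" "fst q = fst l" by blast
  have "q \<noteq> l" using q l by auto
  hence "eventually (\<lambda>w. w \<in> - {q}) (nhds l)" by (intro eventually_nhds_in_open) auto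
  thus ?thesis using ev_g_fst[of l]
  proof eventually_elim
    case (elim w)
    show ?case
    proof
      assume w: "w \<in> X - P"
      show "g (fst w) \<noteq> 0"
      proof
        assume g0: "g (fst w) = 0"
        hence "fst w = fst l" using elim by auto
        hence "w = q" using K2[OF w g0] q by auto
        thus False using elim by auto
      qed
    qed
  qed
next
  case False
  thus ?thesis using ev_g_fst[of l] by (auto elim!: eventually_mono)
qed

lemma proper_F:
  assumes K: "compact K"
  shows "compact ((X - P) \<inter> F -` K)"
proof -
  define S0 where "S0 = {z\<in>X. fst z \<in> fst ` K}"
  have cS0: "compact S0" unfolding S0_def
  proof -
    have "compact (fst ` K)" using K by (intro compact_continuous_image continuous_on_fst continuous_on_id)
    thus "compact {z\<in>X. fst z \<in> fst ` K}" using pp by (simp add: proj_proper_def)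
  qed
  have sub: "(X - P) \<inter> F -` K \<subseteq> S0"
    by (auto simp: S0_def F_def image_iff) (metis fst_conv)
  have clK: "closed K" using K by (rule compact_imp_closed)
  have clS0: "closed S0" using cS0 by (rule compact_imp_closed)
  obtain M where M: "M > 0" "\<And>y. y \<in> K \<Longrightarrow> norm y \<le> M"
    using compact_imp_bounded[OF K] by (meson bounded_pos)
  have "closed ((X - P) \<inter> F -` K)"
    unfolding closed_sequential_limits
  proof (intro allI impI, elim conjE)
    fix x l assume xS: "\<forall>n. x n \<in> (X - P) \<inter> F -` K" and lim: "x \<longlonglongrightarrow> l"
    have "l \<in> S0" using clS0 xS sub lim unfolding closed_sequential_limits by blast
    hence lX: "l \<in> X" by (simp add: S0_def)
    show "l \<in> (X - P) \<inter> F -` K"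
    proof (cases "l \<in> P")
      case False
      hence lY: "l \<in> X - P" using lX by simp
      have "(\<lambda>n. F (x n)) \<longlonglongrightarrow> F l"
        using F_continuous_on lY xS lim unfolding continuous_on_sequentially by (auto simp: o_def)
      moreover have "\<forall>n. F (x n) \<in> K" using xS by auto
      ultimately have "F l \<in> K"
        using clK[unfolded closed_sequential_limits, rule_format, of "\<lambda>n. F (x n)" "F l"] by blast
      thus ?thesis using lY by simp
    next
      case True
      define a where "a = fst l"
      have ga: "g a = 0" and c0: "snd l - \<beta> a \<noteq> 0" using K1[OF True] by (auto simp: a_def)
      have "eventually (\<lambda>n. x n \<in> X - P \<longrightarrow> g (fst (x n)) \<noteq> 0) sequentially"
        using ev_nonspecial[OF True] lim by (rule eventually_compose_filterlim)
      hence evg: "eventually (\<lambda>n. g (fst (x n)) \<noteq> 0) sequentially" using xS by auto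
      define Nn where "Nn n = snd (x n) - \<beta> (fst (x n))" for n
      define Dn where "Dn n = g (fst (x n))" for n
      have "(\<lambda>n. fst (x n)) \<longlonglongrightarrow> a" unfolding a_def by (intro tendsto_fst lim)
      hence limD: "Dn \<longlonglongrightarrow> 0" unfolding Dn_def using isCont_tendsto_compose[OF cg] ga by metis
      have "(\<lambda>n. \<beta> (fst (x n))) \<longlonglongrightarrow> \<beta> a"
        using isCont_tendsto_compose[OF cb] \<open>(\<lambda>n. fst (x n)) \<longlonglongrightarrow> a\<close> by metis
      hence limN: "Nn \<longlonglongrightarrow> snd l - \<beta> a" unfolding Nn_def by (intro tendsto_diff tendsto_snd lim)
      have evN: "eventually (\<lambda>n. Nn n \<noteq> 0) sequentially"
        using tendsto_imp_eventually_ne[OF limN c0] .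
      have "(\<lambda>n. Dn n / Nn n) \<longlonglongrightarrow> 0 / (snd l - \<beta> a)"
        by (intro tendsto_divide limD limN c0)
      hence "(\<lambda>n. norm (Dn n / Nn n)) \<longlonglongrightarrow> 0" using tendsto_norm_zero by fastforce
      hence ev1: "eventually (\<lambda>n. norm (Dn n / Nn n) < 1 / M) sequentially"
        by (rule order_tendstoD) (use M in simp)
      have "eventually (\<lambda>n. norm (Dn n / Nn n) \<ge> 1 / M) sequentially"
        using evg evN
      proof eventually_elim
        case (elim n)
        have "G (x n) = Nn n / Dn n" using elim by (simp add: G_def G0_def Nn_def Dn_def)
        moreover have "norm (G (x n)) \<le> M"
        proof -
          have "F (x n) \<in> K" using xS by auto
          hence "norm (F (x n)) \<le> M" by (rule M(2))
          moreover have "norm (G (x n)) \<le> norm (F (x n))"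
            unfolding F_def by (metis norm_snd_le snd_conv)
          ultimately show ?thesis by linarith
        qed
        ultimately have "norm (Nn n) / norm (Dn n) \<le> M" by (simp add: norm_divide)
        hence "norm (Nn n) \<le> M * norm (Dn n)" using elim by (simp add: Dn_def divide_le_eq)
        hence "1 / M \<le> norm (Dn n) / norm (Nn n)"
          using elim M(1) by (simp add: field_simps)
        thus ?case by (simp add: norm_divide)
      qed
      with ev1 have "eventually (\<lambda>n. False) sequentially" by eventually_elim auto
      thus ?thesis by simp
    qed
  qed
  hence "compact (S0 \<inter> ((X - P) \<inter> F -` K))" using cS0 by (rule compact_Int_closed[rotated])
  moreover have "S0 \<inter> ((X - P) \<inter> F -` K) = (X - P) \<inter> F -` K" using sub by blast
  ultimately show ?thesis by simp
qed

lemma inv_cont: "continuous_on (F ` (X - P)) (inv_into (X - P) F)"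
  unfolding continuous_on_def
proof
  fix y assume "y \<in> F ` (X - P)"
  then obtain z where z: "z \<in> X - P" "y = F z" by blast
  define C where "C = (X - P) \<inter> F -` cball y 1"
  have cC: "compact C" unfolding C_def by (rule proper_F) simp
  have "continuous_on C F" using F_continuous_on by (rule continuous_on_subset) (auto simp: C_def)
  moreover have "\<forall>x\<in>C. inv_into (X - P) F (F x) = x" using inj_F by (auto simp: C_def inv_into_f_f)
  ultimately have ci: "continuous_on (F ` C) (inv_into (X - P) F)"
    using cC continuous_on_inv by blast
  have yC: "y \<in> F ` C" using z by (auto simp: C_def)
  have "at y within F ` (X - P) = at y within F ` C"
  proof (rule at_within_nhd[of _ "ball y 1"])
    show "F ` (X - P) \<inter> ball y 1 - {y} = F ` C \<inter> ball y 1 - {y}"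
      by (auto simp: C_def)
  qed auto
  thus "(inv_into (X - P) F \<longlongrightarrow> inv_into (X - P) F y) (at y within F ` (X - P))"
    using ci yC unfolding continuous_on_def by auto
qed

theorem embedding: "proper_holo_embedding X (X - P) F"
  unfolding proper_holo_embedding_def
proof (intro conjI allI impI)
  show "holo_on_sub X (X - P) F"
    unfolding holo_on_sub_def
  proof (intro allI impI conjI)
    fix \<gamma> V assume c: "chart X \<gamma> V"
    show "(fst \<circ> F \<circ> \<gamma>) holomorphic_on V \<inter> \<gamma> -` (X - P)"
      unfolding fstF using c by (auto simp: chart_def intro: holomorphic_on_subset)
    show "(snd \<circ> F \<circ> \<gamma>) holomorphic_on V \<inter> \<gamma> -` (X - P)"
      unfolding sndF by (rule holo_chart[OF c])
  qed
  show "inj_on F (X - P)" by (rule inj_F)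
  show "(deriv (fst \<circ> F \<circ> \<gamma>) t, deriv (snd \<circ> F \<circ> \<gamma>) t) \<noteq> (0, 0)"
    if "chart X \<gamma> V \<and> t \<in> V \<and> \<gamma> t \<in> X - P" for \<gamma> V t
    using immersion that by blast
  show "continuous_on (F ` (X - P)) (inv_into (X - P) F)" by (rule inv_cont)
  show "compact ((X - P) \<inter> F -` K)" if "compact K" for K using proper_F that by blast
qed

end

lemma compact_discrete_finite:
  fixes C :: "'a::metric_space set"
  assumes "compact C" "\<And>p. p \<in> C \<Longrightarrow> \<exists>e>0. ball p e \<inter> C = {p}"
  shows "finite C"
proof (rule ccontr)
  assume "infinite C"
  then obtain x where x: "x \<in> C" "x islimpt C"
    using assms(1) unfolding compact_eq_Bolzano_Weierstrass by blast
  obtain e where e: "e > 0" "ball x e \<inter> C = {x}" using assms(2)[OF x(1)] by blast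
  have "infinite (C \<inter> ball x e)" using x(2) e(1) by (simp add: islimpt_eq_infinite_ball)
  moreover have "C \<inter> ball x e = {x}" using e(2) by blast
  ultimately show False by simp
qed

theorem proposition1:
  fixes X P :: "(complex \<times> complex) set"
  assumes "riemann_surface_in_C2 X"
    and "proj_proper X"
    and "closed_discrete_in X P"
    and "\<forall>x. (\<exists>p\<in>P. fst p = x) \<longrightarrow>
           ({z\<in>X. fst z = x} \<subseteq> P \<or>
            (\<exists>q. {z\<in>X. fst z = x} - P = {q} \<and> proj_submersion_at X q))"
  shows "\<exists>f. proper_holo_embedding X (X - P) f"
proof -
  note cd = assms(3)
  have PX: "P \<subseteq> X" using cd by (simp add: closed_discrete_in_def)
  obtain T where T: "closed T" "P = X \<inter> T"
    using cd by (auto simp: closed_discrete_in_def closedin_closed)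
  have finP: "finite (P \<inter> {z. fst z \<in> cball 0 r})" for r
  proof -
    have "compact {z\<in>X. fst z \<in> cball 0 r}"
      using assms(2)[unfolded proj_proper_def, rule_format, OF compact_cball] .
    hence "compact ({z\<in>X. fst z \<in> cball 0 r} \<inter> T)" using T(1) by (rule compact_Int_closed)
    moreover have "{z\<in>X. fst z \<in> cball 0 r} \<inter> T = P \<inter> {z. fst z \<in> cball 0 r}" using T by auto
    ultimately have cc: "compact (P \<inter> {z. fst z \<in> cball 0 r})" by simp
    show ?thesis
    proof (rule compact_discrete_finite[OF cc])
      fix p assume p: "p \<in> P \<inter> {z. fst z \<in> cball 0 r}"
      then obtain e where "e > 0" "ball p e \<inter> P = {p}" using cd by (auto simp: closed_discrete_in_def)
      thus "\<exists>e>0. ball p e \<inter> (P \<inter> {z. fst z \<in> cball 0 r}) = {p}" using p by (intro exI[of _ e]) auto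
    qed
  qed
  define A where "A = fst ` P"
  have finA: "finite (A \<inter> cball 0 r)" for r
  proof -
    have "A \<inter> cball 0 r \<subseteq> fst ` (P \<inter> {z. fst z \<in> cball 0 r})" by (auto simp: A_def)
    thus ?thesis using finP[of r] finite_subset by blast
  qed
  obtain g where hg: "g holomorphic_on UNIV" and gz: "\<And>z. g z = 0 \<longleftrightarrow> z \<in> A"
    and dg: "\<And>z. z \<in> A \<Longrightarrow> deriv g z \<noteq> 0"
    using exists_g[OF finA] by blast
  define spec where "spec x w \<longleftrightarrow> (\<forall>p\<in>P. fst p = x \<longrightarrow> snd p \<noteq> w) \<and> (\<forall>q\<in>X-P. fst q = x \<longrightarrow> snd q = w)" for x w
  define c where "c x = (SOME w. spec x w)" for x
  have spec_ex: "\<exists>w. spec x w" if x: "x \<in> A" for x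
  proof -
    have "\<exists>p\<in>P. fst p = x" using x by (auto simp: A_def)
    hence "{z\<in>X. fst z = x} \<subseteq> P \<or> (\<exists>q. {z\<in>X. fst z = x} - P = {q} \<and> proj_submersion_at X q)"
      using assms(4) by blast
    thus ?thesis
    proof
      assume sub: "{z\<in>X. fst z = x} \<subseteq> P"
      have "finite (P \<inter> {z. fst z \<in> cball 0 (norm x)})" by (rule finP)
      hence "finite (snd ` (P \<inter> {z. fst z \<in> cball 0 (norm x)}))" by simp
      then obtain w where w: "w \<notin> snd ` (P \<inter> {z. fst z \<in> cball 0 (norm x)})"
        using ex_new_if_finite[OF infinite_UNIV_char_0] by blast
      have "spec x w" unfolding spec_def
      proof (intro conjI ballI impI)
        fix p assume "p \<in> P" "fst p = x"
        thus "snd p \<noteq> w" using w by (auto simp: image_iff)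
      next
        fix q assume "q \<in> X - P" "fst q = x"
        thus "snd q = w" using sub by auto
      qed
      thus ?thesis by blast
    next
      assume "\<exists>q. {z\<in>X. fst z = x} - P = {q} \<and> proj_submersion_at X q"
      then obtain q where q: "{z\<in>X. fst z = x} - P = {q}" by blast
      have qq: "q \<in> X" "fst q = x" "q \<notin> P" using q by auto
      have "spec x (snd q)" unfolding spec_def
      proof (intro conjI ballI impI)
        fix p assume p: "p \<in> P" "fst p = x"
        show "snd p \<noteq> snd q"
        proof
          assume "snd p = snd q"
          hence "p = q" using p qq by (simp add: prod_eq_iff)
          thus False using p qq by simp
        qed
      next
        fix q' assume "q' \<in> X - P" "fst q' = x"
        hence "q' \<in> {z\<in>X. fst z = x} - P" by simp
        thus "snd q' = snd q" using q by simp
      qed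
      thus ?thesis by blast
    qed
  qed
  have cspec: "spec x (c x)" if "x \<in> A" for x
    unfolding c_def using spec_ex[OF that] by (rule someI_ex)
  obtain \<beta> where hb: "\<beta> holomorphic_on UNIV" and bc: "\<And>z. z \<in> A \<Longrightarrow> \<beta> z = c z"
    using exists_interp[OF finA hg gz dg] by blast
  interpret E: emb_setup X P g \<beta>
  proof
    show "riemann_surface_in_C2 X" "proj_proper X" "closed_discrete_in X P" using assms by auto
    show "g holomorphic_on UNIV" "\<beta> holomorphic_on UNIV" using hg hb by auto
    show "eventually (\<lambda>x. g x \<noteq> 0) (at a)" for a
    proof -
      have "A \<inter> ball a 1 \<subseteq> A \<inter> cball 0 (norm a + 1)"
      proof (rule subsetI)
        fix x assume "x \<in> A \<inter> ball a 1"
        hence "x \<in> A" "x \<in> ball a 1" by auto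
        have "norm x \<le> norm a + norm (x - a)" using norm_triangle_ineq[of a "x - a"] by simp
        moreover have "norm (x - a) < 1" using \<open>x \<in> ball a 1\<close> by (simp add: dist_norm norm_minus_commute)
        ultimately show "x \<in> A \<inter> cball 0 (norm a + 1)" using \<open>x \<in> A\<close> by simp
      qed
      hence "finite (A \<inter> ball a 1)" using finA finite_subset by blast
      hence "\<not> a islimpt A" by (auto simp: islimpt_eq_infinite_ball intro: exI[of _ 1])
      hence "eventually (\<lambda>x. x \<notin> A) (at a)" by (simp add: islimpt_iff_eventually)
      thus ?thesis by (rule eventually_mono) (simp add: gz)
    qed
    show "g a = 0 \<Longrightarrow> deriv g a \<noteq> 0" for a using dg gz by blast
    show "g (fst p) = 0 \<and> \<beta> (fst p) \<noteq> snd p" if p: "p \<in> P" for p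
    proof -
      have pa: "fst p \<in> A" using p by (simp add: A_def)
      have s1: "\<forall>p'\<in>P. fst p' = fst p \<longrightarrow> snd p' \<noteq> c (fst p)"
        using cspec[OF pa] unfolding spec_def by (rule conjunct1)
      hence "snd p \<noteq> c (fst p)" using p by blast
      thus ?thesis using gz[of "fst p"] pa bc[OF pa] by simp
    qed
    show "\<beta> (fst z) = snd z \<and> proj_submersion_at X z \<and> (\<forall>z'\<in>X-P. fst z' = fst z \<longrightarrow> z' = z)"
      if z: "z \<in> X - P" "g (fst z) = 0" for z
    proof -
      have za: "fst z \<in> A" using z gz by simp
      hence "\<exists>p\<in>P. fst p = fst z" unfolding A_def by (metis imageE)
      hence "{w\<in>X. fst w = fst z} \<subseteq> P \<or> (\<exists>q. {w\<in>X. fst w = fst z} - P = {q} \<and> proj_submersion_at X q)"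
        using assms(4) by blast
      moreover have "\<not> {w\<in>X. fst w = fst z} \<subseteq> P" using z by auto
      ultimately obtain q where q: "{w\<in>X. fst w = fst z} - P = {q}" "proj_submersion_at X q" by blast
      have zq: "z = q" using q(1) z by blast
      have s2: "\<forall>q\<in>X-P. fst q = fst z \<longrightarrow> snd q = c (fst z)"
        using cspec[OF za] unfolding spec_def by (rule conjunct2)
      hence "snd z = c (fst z)" using z by blast
      hence "\<beta> (fst z) = snd z" using bc[OF za] by simp
      moreover have "\<forall>z'\<in>X-P. fst z' = fst z \<longrightarrow> z' = z" using q(1) zq by blast
      ultimately show ?thesis using q(2) zq by simp
    qed
  qed
  show ?thesis using E.embedding by blast
qed

end
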